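(* Let $\kappa$ be a regular uncountable cardinal with $\kappa^{<\kappa}=\kappa$ and $\gamma^\omega<\kappa$ for all $\gamma<\kappa$, and let $I^i$, $I^i_\alpha$ be as in the context. For every $i<\kappa$, every limit ordinal $\delta<\kappa$ and every $\nu\in I^i$ there is $\beta<\delta$ such that for every $\sigma\in I^i_\delta$ with $\sigma>\nu$ there is $\sigma'\in I^i_\beta$ with $\sigma\ge\sigma'\ge\nu$.
   Context: $I^0$: order $\kappa\times\mathbb Q$ lexicographically; $I^0$ is the set of $f:\omega\to\kappa\times\mathbb Q$, $f(n)=(f_1(n),f_2(n))$, with $\{n\mid f_1(n)\ne0\}$ finite, ordered by comparing at the least $n$ where they differ. Construct linear orders $I^0\subseteq I^1\subseteq\dots\subseteq I^i\subseteq\dots$ ($i<\kappa$): given $I^i$, for each $\nu\in I^i$ add a new element $\nu^{i+1}$ realizing $tp_{bs}(\nu,I^i\setminus\{\nu\},I^i)\cup\{x<\nu\}$, i.e. $\nu^{i+1}<\nu$ and for every $\tau\in I^i\setminus\{\nu\}$, $\tau<\nu^{i+1}$ iff $\tau<\nu$ (for distinct $\nu,\mu$, $\nu^{i+1}<\mu^{i+1}$ iff $\nu<\mu$); $I^{i+1}=I^i\cup\{\nu^{i+1}\mid\nu\in I^i\}$; at limits $I^i=\bigcup_{j<i}I^j$. Representations: $I^0_\alpha=\{\nu\in I^0\mid \nu_1(n)<\alpha\text{ for all }n<\omega\}$; $I^{i+1}_\alpha=I^i_\alpha\cup\{\nu^{i+1}\mid\nu\in I^i_\alpha\}$; for limit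 $i$, $I^i_\alpha=\bigcup_{j<i}I^j_\alpha$. *)

theory Defs
  imports Complex_Main "HOL-Library.Countable_Set"
begin

(* kappa is represented by a type 'k :: wellorder whose order is an initial ordinal
   (card_order of the relation kord); elements of 'k are the ordinals below kappa. *)

definition kord :: "('k::wellorder) rel" where
  "kord = {(x, y). x \<le> y}"

definition kzero :: "'k::wellorder" where
  "kzero = (LEAST x. True)"

definition is_limit :: "'k::wellorder \<Rightarrow> bool" where
  "is_limit d \<longleftrightarrow> d \<noteq> kzero \<and> (\<forall>b<d. \<exists>c. b < c \<and> c < d)"

definition lexKQ :: "('k::wellorder) \<times> rat \<Rightarrow> 'k \<times> rat \<Rightarrow> bool" where
  "lexKQ p q \<longleftrightarrow> fst p < fst q \<or> (fst p = fst q \<and> snd p < snd q)"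

definition I0 :: "(nat \<Rightarrow> ('k::wellorder) \<times> rat) set" where
  "I0 = {f. finite {n. fst (f n) \<noteq> kzero}}"

definition lessI0 :: "(nat \<Rightarrow> ('k::wellorder) \<times> rat) \<Rightarrow> (nat \<Rightarrow> 'k \<times> rat) \<Rightarrow> bool" where
  "lessI0 f g \<longleftrightarrow> (\<exists>n. (\<forall>m<n. f m = g m) \<and> lexKQ (f n) (g n))"

definition I0rep :: "'k::wellorder \<Rightarrow> (nat \<Rightarrow> 'k \<times> rat) set" where
  "I0rep a = {f \<in> I0. \<forall>n. fst (f n) < a}"

(* Elements of the I^i: Base f is f in I^0; Lift v j is the new element v^{j+1}
   added at stage j+1 for v in I^j. *)
datatype 'k elem = Base "nat \<Rightarrow> 'k \<times> rat" | Lift "'k elem" 'k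

(* membership in I^i (I^{i+1} = I^i u {v^{i+1}}, unions at limits) *)
fun inI :: "'k::wellorder \<Rightarrow> 'k elem \<Rightarrow> bool" where
  "inI i (Base f) \<longleftrightarrow> f \<in> I0"
| "inI i (Lift v j) \<longleftrightarrow> j < i \<and> inI j v"

fun inIrep :: "'k::wellorder \<Rightarrow> 'k \<Rightarrow> 'k elem \<Rightarrow> bool" where
  "inIrep i a (Base f) \<longleftrightarrow> f \<in> I0rep a"
| "inIrep i a (Lift v j) \<longleftrightarrow> j < i \<and> inIrep j a v"

(* the linear order on the I^i, following the construction:
   for tau old (in I^j), tau < v^{j+1} iff tau < v; v^{j+1} < tau iff v <= tau;
   v^{j+1} < mu^{j+1} iff v < mu *)
function lessE :: "('k::wellorder) elem \<Rightarrow> 'k elem \<Rightarrow> bool" where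
  "lessE (Base f) (Base g) = lessI0 f g"
| "lessE (Base f) (Lift u k) = lessE (Base f) u"
| "lessE (Lift v j) (Base g) = (lessE v (Base g) \<or> v = Base g)"
| "lessE (Lift v j) (Lift u k) =
     (if j = k then lessE v u
      else if j < k then lessE (Lift v j) u
      else (lessE v (Lift u k) \<or> v = Lift u k))"
  by pat_completeness auto
termination
  by (relation "measure (\<lambda>(x, y). size x + size y)") auto

definition leE :: "('k::wellorder) elem \<Rightarrow> 'k elem \<Rightarrow> bool" where
  "leE x y \<longleftrightarrow> lessE x y \<or> x = y"

end

theory Submission
  imports Defs
begin

fun baseE :: "'k elem \<Rightarrow> (nat \<Rightarrow> 'k \<times> rat)" where
  "baseE (Base f) = f"
| "baseE (Lift v j) = baseE v"

lemma lessE_base: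
  "baseE x \<noteq> baseE y \<Longrightarrow> lessE x y = lessI0 (baseE x) (baseE y)"
proof (induction x y rule: lessE.induct)
  case (4 v j u k)
  then show ?case by (auto split: if_splits)
qed auto

lemma inIrep_base: "inIrep i a x \<Longrightarrow> baseE x \<in> I0rep a"
  by (induction x arbitrary: i) auto

lemma inI_rep: "inI i x \<Longrightarrow> baseE x \<in> I0rep a \<Longrightarrow> inIrep i a x"
  by (induction x arbitrary: i) auto

lemma lessI0_irrefl: "\<not> lessI0 f f"
  by (auto simp: lessI0_def lexKQ_def)

lemma kzero_le: "kzero \<le> (x::'k::wellorder)"
  unfolding kzero_def by (rule Least_le) simp

theorem mainTheorem10:
  fixes i d :: "'k::wellorder" and v :: "'k elem"
  assumes kcard: "card_order (kord :: 'k rel)"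
    and kreg: "regularCard (kord :: 'k rel)"
    and kunc: "\<not> countable (UNIV :: 'k set)"
    and kpow: "\<forall>A :: 'k set. (card_of A, kord :: 'k rel) \<in> ordLess \<longrightarrow> (card_of (Func A (UNIV :: 'k set)), kord :: 'k rel) \<in> ordLeq"
    and komega: "\<forall>A :: 'k set. (card_of A, kord :: 'k rel) \<in> ordLess \<longrightarrow> (card_of (Func (UNIV :: nat set) A), kord :: 'k rel) \<in> ordLess"
    and dlim: "is_limit d"
    and vI: "inI i v"
  shows "\<exists>b<d. \<forall>s. inIrep i d s \<and> lessE v s \<longrightarrow>
            (\<exists>s'. inIrep i b s' \<and> leE s' s \<and> leE v s')"
proof -
  define g where "g = baseE v"
  have gI0: "g \<in> I0" unfolding g_def using vI by (induction v arbitrary: i) auto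
  define C where "C = fst ` range g \<inter> {x. x < d}"
  have "fst ` range g \<subseteq> insert kzero (fst ` g ` {n. fst (g n) \<noteq> kzero})" by auto
  moreover have "finite {n. fst (g n) \<noteq> kzero}" using gI0 by (simp add: I0_def)
  ultimately have "finite (fst ` range g)" by (meson finite_imageI finite_insert finite_subset)
  hence finC: "finite (insert kzero C)" unfolding C_def by simp
  have kd: "kzero < d" using dlim kzero_le[of d] by (auto simp: is_limit_def order_le_less)
  define M where "M = Max (insert kzero C)"
  have "M \<in> insert kzero C" unfolding M_def using finC by (rule Max_in) simp
  hence "M < d" using kd by (auto simp: C_def)
  then obtain b where Mb: "M < b" and bd: "b < d" using dlim by (auto simp: is_limit_def)
  have Cb: "c < b" if "c \<in> insert kzero C" for c
    using Max_ge[OF finC that] Mb unfolding M_def by simp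
  have Cb': "fst (g m) < b" if "fst (g m) < d" for m using Cb[of "fst (g m)"] that by (auto simp: C_def)
  have kb: "kzero < b" using Cb by simp
  show ?thesis
  proof (intro exI[of _ b] conjI allI impI bd)
    fix s assume sA: "inIrep i d s \<and> lessE v s"
    define f where "f = baseE s"
    have fd: "f \<in> I0rep d" unfolding f_def using sA inIrep_base by blast
    show "\<exists>s'. inIrep i b s' \<and> leE s' s \<and> leE v s'"
    proof (cases "f = g")
      case True
      have "g \<in> I0rep b" using fd True gI0 Cb' by (auto simp: I0rep_def)
      hence "inIrep i b v" using inI_rep vI g_def by blast
      thus ?thesis using sA by (auto simp: leE_def)
    next
      case False
      have "lessI0 g f" using lessE_base[of v s] False sA by (simp add: f_def g_def)
      then obtain n where eq: "\<forall>m<n. g m = f m" and lx: "lexKQ (g n) (f n)"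
        by (auto simp: lessI0_def)
      obtain q where q1: "snd (g n) < q" and q2: "fst (g n) = fst (f n) \<longrightarrow> q < snd (f n)"
      proof (cases "fst (g n) = fst (f n)")
        case True
        hence "snd (g n) < snd (f n)" using lx by (simp add: lexKQ_def)
        then obtain q where "snd (g n) < q" "q < snd (f n)" using dense by blast
        thus ?thesis using that by blast
      next
        case False
        thus ?thesis using that[of "snd (g n) + 1"] by simp
      qed
      define h where "h m = (if m < n then g m else if m = n then (fst (g n), q) else (kzero, 0))" for m
      have fdd: "fst (f m) < d" for m using fd by (simp add: I0rep_def)
      have "{m. fst (h m) \<noteq> kzero} \<subseteq> {..n}" by (auto simp: h_def)
      hence hI0: "h \<in> I0" unfolding I0_def using finite_subset by blast
      have "fst (g n) \<le> fst (f n)" using lx by (auto simp: lexKQ_def)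
      hence gnd: "fst (g n) < d" using fdd[of n] by simp
      have "fst (h m) < b" for m
        using Cb'[OF gnd] kb Cb'[of m] eq fdd[of m] by (auto simp: h_def)
      hence hb: "h \<in> I0rep b" using hI0 by (simp add: I0rep_def)
      have gh: "lessI0 g h" unfolding lessI0_def
        by (rule exI[of _ n]) (auto simp: h_def lexKQ_def q1)
      have hf: "lessI0 h f" unfolding lessI0_def
        by (rule exI[of _ n]) (use eq lx q2 in \<open>auto simp: h_def lexKQ_def\<close>)
      have "lessE (Base h) s" using lessE_base[of "Base h" s] hf lessI0_irrefl
        by (metis baseE.simps(1) f_def)
      moreover have "lessE v (Base h)" using lessE_base[of v "Base h"] gh lessI0_irrefl
        by (metis baseE.simps(1) g_def)
      ultimately show ?thesis using hb by (auto simp: leE_def intro!: exI[of _ "Base h"])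
    qed
  qed
qed

end
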